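(* Let $\nu_1,\nu_2$ be probability measures on an interval $I\subseteq\mathbb{R}$ with densities $n_1,n_2$ strictly positive on $I$, with distribution functions $F_1,F_2$, and let $T=F_2^{-1}\circ F_1$ be the monotone transport map (so $T_\#\nu_1=\nu_2$). Let $\pi(dx,dy)=\nu_1(dx)\delta_{T(x)}(dy)$, let $\nu_-$ and $\nu_+$ be the pushforwards of $\pi$ under $(x,y)\mapsto\min(x,y)$ and $(x,y)\mapsto\max(x,y)$ respectively, and let $A=\{x\in I: x\le T(x)\}$. Then $T(A)=A$, $T(I\setminus A)=I\setminus A$, and $\nu_-,\nu_+$ have densities \[ n_-=n_1\mathbb{1}_A+n_2\mathbb{1}_{I\setminus A},\qquad n_+=n_1\mathbb{1}_{I\setminus A}+n_2\mathbb{1}_A . \] *)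

theory Defs
  imports "HOL-Probability.Probability"
begin

text \<open>Monotone transport map T = F2^{-1} o F1 on the interval I.  F2 restricted to I
  is strictly increasing, so F2^{-1} is its inverse on I.  Outside I (a nu1-null set)
  we use the convention T x = x.\<close>
definition monotone_transport ::
  "real set \<Rightarrow> (real \<Rightarrow> real) \<Rightarrow> (real \<Rightarrow> real) \<Rightarrow> real \<Rightarrow> real" where
  "monotone_transport I F1 F2 x =
     (if x \<in> I then (THE y. y \<in> I \<and> F2 y = F1 x) else x)"

end

theory Submission
  imports Defs
begin

locale dens =
  fixes I :: "real set" and n :: "real \<Rightarrow> real" and \<nu> :: "real measure"
  assumes I: "is_interval I"
    and n_meas: "n \<in> borel_measurable borel"
    and n_pos: "\<And>x. x \<in> I \<Longrightarrow> n x > 0"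
    and \<nu>_def: "\<nu> = density lborel (\<lambda>x. ennreal (n x * indicator I x))"
    and probsp: "prob_space \<nu>"
begin

lemma mem_I: "a \<in> I \<Longrightarrow> b \<in> I \<Longrightarrow> a \<le> x \<Longrightarrow> x \<le> b \<Longrightarrow> x \<in> I"
  using I unfolding is_interval_1 by blast

lemma I_borel: "I \<in> sets borel"
  using I real_interval_borel_measurable by blast

lemma sets_\<nu>: "sets \<nu> = sets borel"
  unfolding \<nu>_def by simp

lemma space_\<nu>: "space \<nu> = UNIV"
  unfolding \<nu>_def by simp

lemma rd: "real_distribution \<nu>"
  unfolding real_distribution_def real_distribution_axioms_def using probsp sets_\<nu> by auto

lemma dmeas: "(\<lambda>x. ennreal (n x * indicator I x)) \<in> borel_measurable borel"
  using n_meas I_borel by measurable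

lemma em_eq: "S \<in> sets borel \<Longrightarrow> emeasure \<nu> S = (\<integral>\<^sup>+ x. ennreal (n x * indicator I x) * indicator S x \<partial>lborel)"
  unfolding \<nu>_def by (subst emeasure_density) (use dmeas in auto)

lemma em_Int: "S \<in> sets borel \<Longrightarrow> emeasure \<nu> S = emeasure \<nu> (S \<inter> I)"
proof -
  assume S: "S \<in> sets borel"
  have "emeasure \<nu> S = (\<integral>\<^sup>+ x. ennreal (n x * indicator I x) * indicator S x \<partial>lborel)" using em_eq S .
  also have "\<dots> = (\<integral>\<^sup>+ x. ennreal (n x * indicator I x) * indicator (S \<inter> I) x \<partial>lborel)"
    by (intro nn_integral_cong) (auto simp: indicator_def)
  also have "\<dots> = emeasure \<nu> (S \<inter> I)" using em_eq S I_borel by auto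
  finally show ?thesis .
qed

lemma m_Int: "S \<in> sets borel \<Longrightarrow> measure \<nu> S = measure \<nu> (S \<inter> I)"
  using em_Int by (simp add: measure_def)

lemma m_I: "measure \<nu> I = 1"
proof -
  have "measure \<nu> I = measure \<nu> UNIV" using m_Int[of UNIV] by simp
  also have "\<dots> = 1" using probsp prob_space.prob_space space_\<nu> by metis
  finally show ?thesis .
qed

lemma em_point: "emeasure \<nu> {x} = 0"
proof -
  have "emeasure \<nu> {x} = (\<integral>\<^sup>+ y. ennreal (n y * indicator I y) * indicator {x} y \<partial>lborel)" using em_eq by simp
  also have "\<dots> = 0" by (rule nn_integral_null_set[simplified]) (simp add: finite_imp_null_set_lborel)
  finally show ?thesis .
qed

lemma em_pos: assumes "a < b" "a \<in> I" "b \<in> I" shows "emeasure \<nu> {a<..b} > 0"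
proof (rule ccontr)
  assume "\<not> ?thesis"
  then have "(\<integral>\<^sup>+ x. ennreal (n x * indicator I x) * indicator {a<..b} x \<partial>lborel) = 0"
    using em_eq by simp
  then have ae: "AE x in lborel. ennreal (n x * indicator I x) * indicator {a<..b} x = 0"
    by (subst (asm) nn_integral_0_iff_AE) (use dmeas in auto)
  have *: "x \<in> {a<..b} \<Longrightarrow> ennreal (n x * indicator I x) * indicator {a<..b} x \<noteq> 0" for x
  proof -
    assume x: "x \<in> {a<..b}"
    then have "x \<in> I" using mem_I[of a b x] assms by simp
    then show ?thesis using x n_pos[of x] by auto
  qed
  from ae have ae2: "AE x in lborel. x \<notin> {a<..b}" by eventually_elim (use * in blast)
  have eq: "{x\<in>space lborel. \<not> (x \<notin> {a<..b})} = {a<..b}" by auto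
  have m: "{a<..b} \<in> sets lborel" by simp
  have "emeasure lborel {a<..b} = 0" using AE_iff_measurable[OF m eq] ae2 by blast
  then show False using assms by simp
qed

sublocale rdist: real_distribution \<nu> by (rule rd)

lemma m_pos: assumes "a < b" "a \<in> I" "b \<in> I" shows "measure \<nu> {a<..b} > 0"
  using em_pos[OF assms] by (simp add: rdist.emeasure_eq_measure)

lemma F_strict: assumes "a < b" "a \<in> I" "b \<in> I" shows "cdf \<nu> a < cdf \<nu> b"
proof -
  have "cdf \<nu> b = measure \<nu> ({..a} \<union> {a<..b})"
    unfolding cdf_def2 by (rule arg_cong[where f="measure \<nu>"]) (use assms in auto)
  also have "\<dots> = measure \<nu> {..a} + measure \<nu> {a<..b}"
    by (rule rdist.finite_measure_Union) auto
  finally show ?thesis using m_pos[OF assms] by (simp add: cdf_def2)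
qed

lemma F_cont: "isCont (cdf \<nu>) x"
  using em_point[of x] by (simp add: rdist.isCont_cdf rdist.emeasure_eq_measure)

lemma F_below: "(\<forall>a\<in>I. y < a) \<Longrightarrow> cdf \<nu> y = 0"
proof -
  assume "\<forall>a\<in>I. y < a"
  then have "{..y} \<inter> I = {}" by force
  then show ?thesis unfolding cdf_def2 by (subst m_Int) auto
qed

lemma F_above: "(\<forall>a\<in>I. a < y) \<Longrightarrow> cdf \<nu> y = 1"
proof -
  assume "\<forall>a\<in>I. a < y"
  then have "{..y} \<inter> I = I" by auto
  then show ?thesis unfolding cdf_def2 by (subst m_Int) (auto simp: m_I)
qed

lemma notin_I: "y \<notin> I \<Longrightarrow> (\<forall>a\<in>I. y < a) \<or> (\<forall>a\<in>I. a < y)"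
  using mem_I by (metis linorder_not_le order.refl)

lemma surj01: assumes "0 < t" "t < 1" shows "\<exists>y\<in>I. cdf \<nu> y = t"
proof -
  have "eventually (\<lambda>x. cdf \<nu> x < t) at_bot"
    using order_tendstoD(2)[OF rdist.cdf_lim_at_bot assms(1)] .
  then obtain p where p: "cdf \<nu> p < t" by (auto simp: eventually_at_bot_linorder)
  have "eventually (\<lambda>x. cdf \<nu> x > t) at_top"
    using order_tendstoD(1)[OF rdist.cdf_lim_at_top_prob assms(2)] .
  then obtain q where q: "cdf \<nu> q > t" by (auto simp: eventually_at_top_linorder)
  have pq: "p \<le> q"
  proof (rule ccontr)
    assume "\<not> p \<le> q"
    then have "cdf \<nu> q \<le> cdf \<nu> p" by (intro rdist.cdf_nondecreasing) simp
    then show False using p q by simp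
  qed
  have "continuous_on {p..q} (cdf \<nu>)"
    using F_cont by (simp add: continuous_at_imp_continuous_on)
  then obtain y where y: "cdf \<nu> y = t"
    using IVT'[of "cdf \<nu>" p t q] p q pq by force
  have "y \<in> I"
  proof (rule ccontr)
    assume "y \<notin> I"
    then show False using notin_I[of y] F_below[of y] F_above[of y] y assms by auto
  qed
  then show ?thesis using y by blast
qed

lemma zero_min: "x \<in> I \<Longrightarrow> cdf \<nu> x = 0 \<Longrightarrow> z \<in> I \<Longrightarrow> x \<le> z"
  using F_strict[of z x] rdist.cdf_nonneg[of z] by force

lemma one_max: "x \<in> I \<Longrightarrow> cdf \<nu> x = 1 \<Longrightarrow> z \<in> I \<Longrightarrow> z \<le> x"
  using F_strict[of x z] rdist.cdf_bounded_prob[of z] by force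

lemma min_zero: assumes "x \<in> I" "\<forall>z\<in>I. x \<le> z" shows "cdf \<nu> x = 0"
proof -
  have "{..x} \<inter> I \<subseteq> {x}" using assms by auto
  then have "measure \<nu> ({..x} \<inter> I) \<le> measure \<nu> {x}"
    by (intro rdist.finite_measure_mono) auto
  also have "\<dots> = 0" using em_point[of x] by (simp add: rdist.emeasure_eq_measure)
  finally show ?thesis unfolding cdf_def2 using m_Int[of "{..x}"] measure_nonneg[of \<nu> "{..x} \<inter> I"] by simp
qed

lemma max_one: assumes "x \<in> I" "\<forall>z\<in>I. z \<le> x" shows "cdf \<nu> x = 1"
proof -
  have "{..x} \<inter> I = I" using assms by auto
  then show ?thesis unfolding cdf_def2 by (subst m_Int) (auto simp: m_I)
qed

end

lemma match:
  assumes d1: "dens I n \<nu>" and d2: "dens I n' \<nu>'" and x: "x \<in> I"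
  shows "\<exists>y\<in>I. cdf \<nu>' y = cdf \<nu> x"
proof -
  interpret a: dens I n \<nu> by (rule d1)
  interpret b: dens I n' \<nu>' by (rule d2)
  consider "cdf \<nu> x = 0" | "cdf \<nu> x = 1" | "0 < cdf \<nu> x" "cdf \<nu> x < 1"
    using a.rdist.cdf_nonneg[of x] a.rdist.cdf_bounded_prob[of x] by linarith
  then show ?thesis
  proof cases
    case 1
    then have "\<forall>z\<in>I. x \<le> z" using a.zero_min x by blast
    then have "cdf \<nu>' x = 0" using b.min_zero x by blast
    then show ?thesis using 1 x by auto
  next
    case 2
    then have "\<forall>z\<in>I. z \<le> x" using a.one_max x by blast
    then have "cdf \<nu>' x = 1" using b.max_one x by blast
    then show ?thesis using 2 x by auto
  next
    case 3
    then show ?thesis using b.surj01 by blast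
  qed
qed

lemma uniq:
  assumes d: "dens I n \<nu>" and "y \<in> I" "y' \<in> I" "cdf \<nu> y = cdf \<nu> y'"
  shows "y = y'"
proof -
  interpret a: dens I n \<nu> by (rule d)
  show ?thesis using a.F_strict[of y y'] a.F_strict[of y' y] assms(2-4)
    by (metis less_irrefl linorder_neqE_linordered_idom)
qed

theorem mainTheorem8:
  fixes I :: "real set" and n1 n2 F1 F2 T :: "real \<Rightarrow> real"
    and \<nu>1 \<nu>2 :: "real measure" and A :: "real set"
  assumes I: "is_interval I"
    and n1_meas: "n1 \<in> borel_measurable borel" and n2_meas: "n2 \<in> borel_measurable borel"
    and n1_pos: "\<And>x. x \<in> I \<Longrightarrow> n1 x > 0" and n2_pos: "\<And>x. x \<in> I \<Longrightarrow> n2 x > 0"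
    and \<nu>1_def: "\<nu>1 = density lborel (\<lambda>x. ennreal (n1 x * indicator I x))"
    and \<nu>2_def: "\<nu>2 = density lborel (\<lambda>x. ennreal (n2 x * indicator I x))"
    and prob1: "prob_space \<nu>1" and prob2: "prob_space \<nu>2"
    and F1_def: "\<And>x. F1 x = measure \<nu>1 {..x}"
    and F2_def: "\<And>x. F2 x = measure \<nu>2 {..x}"
    and T_def: "T = monotone_transport I F1 F2"
    and A_def: "A = {x \<in> I. x \<le> T x}"
  shows "T ` A = A \<and> T ` (I - A) = I - A \<and>
    (let \<pi> = distr \<nu>1 (lborel \<Otimes>\<^sub>M lborel) (\<lambda>x. (x, T x)) in
       distr \<pi> lborel (\<lambda>(x, y). min x y) =
         density lborel (\<lambda>x. ennreal ((n1 x * indicator A x + n2 x * indicator (I - A) x)))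
     \<and> distr \<pi> lborel (\<lambda>(x, y). max x y) =
         density lborel (\<lambda>x. ennreal ((n1 x * indicator (I - A) x + n2 x * indicator A x))))"
proof -
  have D1: "dens I n1 \<nu>1" by (rule dens.intro[OF I n1_meas n1_pos \<nu>1_def prob1])
  have D2: "dens I n2 \<nu>2" by (rule dens.intro[OF I n2_meas n2_pos \<nu>2_def prob2])
  interpret d1: dens I n1 \<nu>1 by (rule D1)
  interpret d2: dens I n2 \<nu>2 by (rule D2)
  have F1c: "F1 = cdf \<nu>1" by (rule ext) (simp add: F1_def cdf_def2)
  have F2c: "F2 = cdf \<nu>2" by (rule ext) (simp add: F2_def cdf_def2)
  have Tin: "T x = (THE y. y \<in> I \<and> F2 y = F1 x)" if "x \<in> I" for x
    using that by (simp add: T_def monotone_transport_def)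
  have Tout: "T x = x" if "x \<notin> I" for x
    using that by (simp add: T_def monotone_transport_def)
  have ex1: "\<exists>!y. y \<in> I \<and> F2 y = F1 x" if xI: "x \<in> I" for x
  proof -
    obtain y where y: "y \<in> I" "F2 y = F1 x" using match[OF D1 D2 xI] unfolding F1c F2c by blast
    show ?thesis
    proof (rule ex1I[of _ y])
      show "y \<in> I \<and> F2 y = F1 x" using y by simp
      fix y' assume "y' \<in> I \<and> F2 y' = F1 x"
      then show "y' = y" using uniq[OF D2, of y' y] y unfolding F2c by simp
    qed
  qed
  have TP: "T x \<in> I \<and> F2 (T x) = F1 x" if "x \<in> I" for x
    using theI'[OF ex1[OF that]] Tin[OF that] by simp
  have Teq: "T x = y" if "x \<in> I" "y \<in> I" "F2 y = F1 x" for x y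
    using ex1[OF that(1)] TP[OF that(1)] that by blast
  have Tstrict: "T a < T b" if "a < b" "a \<in> I" "b \<in> I" for a b
  proof (rule ccontr)
    assume "\<not> T a < T b"
    then have "F2 (T b) \<le> F2 (T a)" unfolding F2c by (intro d2.rdist.cdf_nondecreasing) simp
    then show False using TP[OF that(2)] TP[OF that(3)] d1.F_strict[OF that] unfolding F1c by simp
  qed
  have Tle: "T a \<le> T b \<longleftrightarrow> a \<le> b" if "a \<in> I" "b \<in> I" for a b
    using Tstrict[of a b] Tstrict[of b a] that by (metis less_le_not_le linorder_neqE_linordered_idom order_refl)
  have Tsurj: "\<exists>x\<in>I. T x = y" if yI: "y \<in> I" for y
  proof -
    obtain x where "x \<in> I" "cdf \<nu>1 x = cdf \<nu>2 y" using match[OF D2 D1 yI] by blast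
    then show ?thesis using Teq[of x y] yI unfolding F1c F2c by auto
  qed
  have AI: "A \<subseteq> I" unfolding A_def by auto
  have TA: "T ` A = A"
  proof
    show "T ` A \<subseteq> A"
    proof
      fix y assume "y \<in> T ` A"
      then obtain x where x: "x \<in> A" "y = T x" by blast
      then have "x \<in> I" "x \<le> T x" unfolding A_def by auto
      then show "y \<in> A" using x TP Tle unfolding A_def by auto
    qed
  next
    show "A \<subseteq> T ` A"
    proof
      fix y assume y: "y \<in> A"
      then have yI: "y \<in> I" and yle: "y \<le> T y" unfolding A_def by auto
      obtain x where x: "x \<in> I" "T x = y" using Tsurj[OF yI] by blast
      have "x \<le> T x"
      proof (rule ccontr)
        assume "\<not> x \<le> T x"
        then have "T y < T x" using Tstrict[of y x] x yI by auto
        then show False using x yle by simp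
      qed
      then show "y \<in> T ` A" using x unfolding A_def by auto
    qed
  qed
  have TB: "T ` (I - A) = I - A"
  proof
    show "T ` (I - A) \<subseteq> I - A"
    proof
      fix y assume "y \<in> T ` (I - A)"
      then obtain x where x: "x \<in> I - A" "y = T x" by blast
      then have xI: "x \<in> I" and "T x < x" unfolding A_def by auto
      then have "T (T x) < T x" using Tstrict[of "T x" x] TP[OF xI] by auto
      then show "y \<in> I - A" using x TP[OF xI] unfolding A_def by auto
    qed
  next
    show "I - A \<subseteq> T ` (I - A)"
    proof
      fix y assume y: "y \<in> I - A"
      then have yI: "y \<in> I" and ylt: "T y < y" unfolding A_def by auto
      obtain x where x: "x \<in> I" "T x = y" using Tsurj[OF yI] by blast
      have "T x < x"
      proof (rule ccontr)
        assume "\<not> T x < x"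
        then have "y \<le> T y" using Tle[of x y] x yI by auto
        then show False using ylt by simp
      qed
      then show "y \<in> T ` (I - A)" using x unfolding A_def by auto
    qed
  qed
  have memA: "T x \<in> A \<longleftrightarrow> x \<in> A" if "x \<in> I" for x
    using TA TB that TP[OF that] by blast
  have Tmono: "mono_on I T" using Tle by (auto intro!: mono_onI)
  have Tmeas': "(\<lambda>x. if x \<in> I then T x else x) \<in> borel_measurable borel"
    by (subst measurable_If_restrict_space_iff)
       (auto intro: borel_measurable_mono_on_fnc[OF Tmono] measurable_restrict_space1 simp: d1.I_borel)
  have "(\<lambda>x. if x \<in> I then T x else x) = T" using Tout by auto
  with Tmeas' have Tmeas[measurable]: "T \<in> borel_measurable borel" by simp
  have Tmeas1: "T \<in> measurable \<nu>1 borel" using Tmeas by simp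
  have Tpush: "distr \<nu>1 borel T = \<nu>2"
  proof (rule cdf_unique)
    show "real_distribution (distr \<nu>1 borel T)" using Tmeas1 by simp
    show "real_distribution \<nu>2" by (rule d2.rd)
    show "cdf (distr \<nu>1 borel T) = cdf \<nu>2"
    proof
      fix c
      have pre: "T -` {..c} \<in> sets borel" using measurable_sets[OF Tmeas, of "{..c}"] by simp
      have "cdf (distr \<nu>1 borel T) c = measure \<nu>1 (T -` {..c} \<inter> I)"
        unfolding cdf_def2 using measure_distr[OF Tmeas1, of "{..c}"] d1.m_Int[OF pre] by (simp add: d1.space_\<nu>)
      also have "\<dots> = cdf \<nu>2 c"
      proof (cases "c \<in> I")
        case True
        obtain x0 where x0: "x0 \<in> I" "T x0 = c" using Tsurj[OF True] by blast
        have "T -` {..c} \<inter> I = {..x0} \<inter> I" using Tle x0 by auto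
        then have "measure \<nu>1 (T -` {..c} \<inter> I) = measure \<nu>1 {..x0}" using d1.m_Int[of "{..x0}"] by simp
        also have "\<dots> = F1 x0" by (simp add: F1_def)
        also have "\<dots> = F2 c" using TP[OF x0(1)] x0 by simp
        finally show ?thesis by (simp add: F2c)
      next
        case False
        then consider "\<forall>a\<in>I. c < a" | "\<forall>a\<in>I. a < c" using d1.notin_I by blast
        then show ?thesis
        proof cases
          case 1
          then have "T -` {..c} \<inter> I = {}" using TP by force
          then show ?thesis using d2.F_below[OF 1] by simp
        next
          case 2
          then have "T -` {..c} \<inter> I = I" using TP by force
          then show ?thesis using d2.F_above[OF 2] d1.m_I by simp
        qed
      qed
      finally show "cdf (distr \<nu>1 borel T) c = cdf \<nu>2 c" .
    qed
  qed
  have Ttrans: "emeasure \<nu>1 (T -` S \<inter> I) = emeasure \<nu>2 S" if S: "S \<in> sets borel" for S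
  proof -
    have pre: "T -` S \<in> sets borel" using measurable_sets[OF Tmeas S] by simp
    have "emeasure \<nu>2 S = emeasure \<nu>1 (T -` S \<inter> space \<nu>1)"
      using emeasure_distr[OF Tmeas1 S] Tpush by simp
    also have "\<dots> = emeasure \<nu>1 (T -` S \<inter> I)" using d1.em_Int[OF pre] by (simp add: d1.space_\<nu>)
    finally show ?thesis by simp
  qed

  have A_borel[measurable]: "A \<in> sets borel"
  proof -
    have "{x \<in> space borel. x \<le> T x} \<in> sets borel" by measurable
    then have "I \<inter> {x \<in> space borel. x \<le> T x} \<in> sets borel" using d1.I_borel by auto
    moreover have "A = I \<inter> {x \<in> space borel. x \<le> T x}" unfolding A_def by auto
    ultimately show ?thesis by simp
  qed
  have I_borel[measurable]: "I \<in> sets borel" by (rule d1.I_borel)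
  have B_borel[measurable]: "I - A \<in> sets borel" using A_borel d1.I_borel by auto
  note [measurable] = n1_meas n2_meas
  have s1: "sets \<nu>1 = sets lborel" by (simp add: d1.sets_\<nu>)
  have pairm: "(\<lambda>x. (x, T x)) \<in> measurable \<nu>1 (lborel \<Otimes>\<^sub>M lborel)"
  proof (rule measurable_Pair)
    show "(\<lambda>x. x) \<in> measurable \<nu>1 lborel" by (rule measurable_ident_sets[OF s1])
    show "T \<in> measurable \<nu>1 lborel" using Tmeas by (simp add: measurable_cong_sets[OF s1 refl])
  qed
  have fm: "(fst :: real \<times> real \<Rightarrow> real) \<in> borel_measurable (lborel \<Otimes>\<^sub>M lborel)"
    using measurable_fst[of lborel lborel] by (simp add: measurable_cong_sets[OF refl sets_lborel])
  have sm: "(snd :: real \<times> real \<Rightarrow> real) \<in> borel_measurable (lborel \<Otimes>\<^sub>M lborel)"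
    using measurable_snd[of lborel lborel] by (simp add: measurable_cong_sets[OF refl sets_lborel])
  have minm: "(\<lambda>(x, y). min x y :: real) \<in> measurable (lborel \<Otimes>\<^sub>M lborel) lborel"
    unfolding measurable_cong_sets[OF refl sets_lborel] by measurable
  have maxm: "(\<lambda>(x, y). max x y :: real) \<in> measurable (lborel \<Otimes>\<^sub>M lborel) lborel"
    unfolding measurable_cong_sets[OF refl sets_lborel] by measurable
  have phim: "(\<lambda>x. min x (T x)) \<in> borel_measurable borel" by measurable
  have psim: "(\<lambda>x. max x (T x)) \<in> borel_measurable borel" by measurable
  have phim1: "(\<lambda>x. min x (T x)) \<in> measurable \<nu>1 lborel" using phim by (simp add: measurable_cong_sets[OF s1 refl])
  have psim1: "(\<lambda>x. max x (T x)) \<in> measurable \<nu>1 lborel" using psim by (simp add: measurable_cong_sets[OF s1 refl])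
  have eq_min: "distr (distr \<nu>1 (lborel \<Otimes>\<^sub>M lborel) (\<lambda>x. (x, T x))) lborel (\<lambda>(x, y). min x y) = distr \<nu>1 lborel (\<lambda>x. min x (T x))"
    using distr_distr[OF minm pairm] by (simp add: comp_def)
  have eq_max: "distr (distr \<nu>1 (lborel \<Otimes>\<^sub>M lborel) (\<lambda>x. (x, T x))) lborel (\<lambda>(x, y). max x y) = distr \<nu>1 lborel (\<lambda>x. max x (T x))"
    using distr_distr[OF maxm pairm] by (simp add: comp_def)
  have minA: "min x (T x) = x" if "x \<in> A" for x using that unfolding A_def by auto
  have minB: "min x (T x) = T x" if "x \<in> I - A" for x using that unfolding A_def by auto
  have maxA: "max x (T x) = T x" if "x \<in> A" for x using that unfolding A_def by auto
  have maxB: "max x (T x) = x" if "x \<in> I - A" for x using that unfolding A_def by auto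
  have em1: "emeasure \<nu>1 S = (\<integral>\<^sup>+ x. ennreal (n1 x * indicator I x) * indicator S x \<partial>lborel)" if "S \<in> sets borel" for S
    using d1.em_eq[OF that] by simp
  have em2: "emeasure \<nu>2 S = (\<integral>\<^sup>+ x. ennreal (n2 x * indicator I x) * indicator S x \<partial>lborel)" if "S \<in> sets borel" for S
    using d2.em_eq[OF that] by simp
  have iA: "(indicator A :: real \<Rightarrow> real) \<in> borel_measurable borel" using A_borel by (rule borel_measurable_indicator)
  have iB: "(indicator (I - A) :: real \<Rightarrow> real) \<in> borel_measurable borel" using B_borel by (rule borel_measurable_indicator)
  have g1: "(\<lambda>x. n1 x * indicator A x + n2 x * indicator (I - A) x) \<in> borel_measurable borel"
    using n1_meas n2_meas iA iB by (intro borel_measurable_add borel_measurable_times) auto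
  have gmin: "(\<lambda>x. ennreal (n1 x * indicator A x + n2 x * indicator (I - A) x)) \<in> borel_measurable borel"
    using measurable_compose[OF g1 measurable_ennreal] by simp
  have g2: "(\<lambda>x. n1 x * indicator (I - A) x + n2 x * indicator A x) \<in> borel_measurable borel"
    using n1_meas n2_meas iA iB by (intro borel_measurable_add borel_measurable_times) auto
  have gmax: "(\<lambda>x. ennreal (n1 x * indicator (I - A) x + n2 x * indicator A x)) \<in> borel_measurable borel"
    using measurable_compose[OF g2 measurable_ennreal] by simp
  have dens_min: "distr \<nu>1 lborel (\<lambda>x. min x (T x)) =
      density lborel (\<lambda>x. ennreal ((n1 x * indicator A x + n2 x * indicator (I - A) x)))"
  proof (rule measure_eqI)
    show "sets (distr \<nu>1 lborel (\<lambda>x. min x (T x))) = sets (density lborel (\<lambda>x. ennreal ((n1 x * indicator A x + n2 x * indicator (I - A) x))))"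
      by simp
    fix S assume "S \<in> sets (distr \<nu>1 lborel (\<lambda>x. min x (T x)))"
    then have S[measurable]: "S \<in> sets borel" by simp
    have pre: "(\<lambda>x. min x (T x)) -` S \<in> sets borel" using measurable_sets[OF phim S] by simp
    have split: "(\<lambda>x. min x (T x)) -` S \<inter> I = (S \<inter> A) \<union> (T -` (S \<inter> (I - A)) \<inter> I)"
    proof (intro set_eqI iffI)
      fix x assume x: "x \<in> (\<lambda>x. min x (T x)) -` S \<inter> I"
      show "x \<in> (S \<inter> A) \<union> (T -` (S \<inter> (I - A)) \<inter> I)"
      proof (cases "x \<in> A")
        case True then show ?thesis using x minA TP by auto
      next
        case False then show ?thesis using x minB memA TP by auto
      qed
    next
      fix x assume x: "x \<in> (S \<inter> A) \<union> (T -` (S \<inter> (I - A)) \<inter> I)"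
      show "x \<in> (\<lambda>x. min x (T x)) -` S \<inter> I"
      proof (cases "x \<in> A")
        case True then show ?thesis using x minA memA AI TP by auto
      next
        case False then show ?thesis using x minB TP by auto
      qed
    qed
    have disj: "(S \<inter> A) \<inter> (T -` (S \<inter> (I - A)) \<inter> I) = {}" using memA by auto
    have m2: "T -` (S \<inter> (I - A)) \<inter> I \<in> sets borel"
      using measurable_sets[OF Tmeas, of "S \<inter> (I - A)"] by simp
    have "emeasure (distr \<nu>1 lborel (\<lambda>x. min x (T x))) S = emeasure \<nu>1 ((\<lambda>x. min x (T x)) -` S \<inter> space \<nu>1)"
      by (rule emeasure_distr[OF phim1]) simp
    also have "\<dots> = emeasure \<nu>1 ((\<lambda>x. min x (T x)) -` S \<inter> I)" using d1.em_Int[OF pre] by (simp add: d1.space_\<nu>)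
    also have "\<dots> = emeasure \<nu>1 (S \<inter> A) + emeasure \<nu>1 (T -` (S \<inter> (I - A)) \<inter> I)"
      unfolding split by (rule plus_emeasure[symmetric]) (use m2 disj in \<open>auto simp: d1.sets_\<nu>\<close>)
    also have "\<dots> = emeasure \<nu>1 (S \<inter> A) + emeasure \<nu>2 (S \<inter> (I - A))" using Ttrans[of "S \<inter> (I - A)"] by simp
    also have "\<dots> = (\<integral>\<^sup>+ x. ennreal (n1 x * indicator I x) * indicator (S \<inter> A) x \<partial>lborel)
                  + (\<integral>\<^sup>+ x. ennreal (n2 x * indicator I x) * indicator (S \<inter> (I - A)) x \<partial>lborel)"
      using em1[of "S \<inter> A"] em2[of "S \<inter> (I - A)"] by simp
    also have "\<dots> = (\<integral>\<^sup>+ x. ennreal (n1 x * indicator I x) * indicator (S \<inter> A) x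
                  + ennreal (n2 x * indicator I x) * indicator (S \<inter> (I - A)) x \<partial>lborel)"
      by (rule nn_integral_add[symmetric]) measurable
    also have "\<dots> = (\<integral>\<^sup>+ x. ennreal ((n1 x * indicator A x + n2 x * indicator (I - A) x)) * indicator S x \<partial>lborel)"
      by (rule nn_integral_cong) (use AI in \<open>auto simp: indicator_def\<close>)
    also have "\<dots> = emeasure (density lborel (\<lambda>x. ennreal ((n1 x * indicator A x + n2 x * indicator (I - A) x)))) S"
      by (rule emeasure_density[symmetric]) (simp_all add: gmin gmax)
    finally show "emeasure (distr \<nu>1 lborel (\<lambda>x. min x (T x))) S = emeasure (density lborel (\<lambda>x. ennreal ((n1 x * indicator A x + n2 x * indicator (I - A) x)))) S" .
  qed
  have dens_max: "distr \<nu>1 lborel (\<lambda>x. max x (T x)) =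
      density lborel (\<lambda>x. ennreal ((n1 x * indicator (I - A) x + n2 x * indicator A x)))"
  proof (rule measure_eqI)
    show "sets (distr \<nu>1 lborel (\<lambda>x. max x (T x))) = sets (density lborel (\<lambda>x. ennreal ((n1 x * indicator (I - A) x + n2 x * indicator A x))))"
      by simp
    fix S assume "S \<in> sets (distr \<nu>1 lborel (\<lambda>x. max x (T x)))"
    then have S[measurable]: "S \<in> sets borel" by simp
    have pre: "(\<lambda>x. max x (T x)) -` S \<in> sets borel" using measurable_sets[OF psim S] by simp
    have split: "(\<lambda>x. max x (T x)) -` S \<inter> I = (T -` (S \<inter> A) \<inter> I) \<union> (S \<inter> (I - A))"
    proof (intro set_eqI iffI)
      fix x assume x: "x \<in> (\<lambda>x. max x (T x)) -` S \<inter> I"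
      show "x \<in> (T -` (S \<inter> A) \<inter> I) \<union> (S \<inter> (I - A))"
      proof (cases "x \<in> A")
        case True then show ?thesis using x maxA memA TP by auto
      next
        case False then show ?thesis using x maxB TP by auto
      qed
    next
      fix x assume x: "x \<in> (T -` (S \<inter> A) \<inter> I) \<union> (S \<inter> (I - A))"
      show "x \<in> (\<lambda>x. max x (T x)) -` S \<inter> I"
      proof (cases "x \<in> A")
        case True then show ?thesis using x maxA memA AI TP by auto
      next
        case False then show ?thesis using x maxB memA TP by auto
      qed
    qed
    have disj: "(T -` (S \<inter> A) \<inter> I) \<inter> (S \<inter> (I - A)) = {}" using memA by auto
    have m2: "T -` (S \<inter> A) \<inter> I \<in> sets borel"
      using measurable_sets[OF Tmeas, of "S \<inter> A"] by simp
    have "emeasure (distr \<nu>1 lborel (\<lambda>x. max x (T x))) S = emeasure \<nu>1 ((\<lambda>x. max x (T x)) -` S \<inter> space \<nu>1)"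
      by (rule emeasure_distr[OF psim1]) simp
    also have "\<dots> = emeasure \<nu>1 ((\<lambda>x. max x (T x)) -` S \<inter> I)" using d1.em_Int[OF pre] by (simp add: d1.space_\<nu>)
    also have "\<dots> = emeasure \<nu>1 (T -` (S \<inter> A) \<inter> I) + emeasure \<nu>1 (S \<inter> (I - A))"
      unfolding split by (rule plus_emeasure[symmetric]) (use m2 disj in \<open>auto simp: d1.sets_\<nu>\<close>)
    also have "\<dots> = emeasure \<nu>2 (S \<inter> A) + emeasure \<nu>1 (S \<inter> (I - A))" using Ttrans[of "S \<inter> A"] by simp
    also have "\<dots> = (\<integral>\<^sup>+ x. ennreal (n2 x * indicator I x) * indicator (S \<inter> A) x \<partial>lborel)
                  + (\<integral>\<^sup>+ x. ennreal (n1 x * indicator I x) * indicator (S \<inter> (I - A)) x \<partial>lborel)"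
      using em2[of "S \<inter> A"] em1[of "S \<inter> (I - A)"] by simp
    also have "\<dots> = (\<integral>\<^sup>+ x. ennreal (n2 x * indicator I x) * indicator (S \<inter> A) x
                  + ennreal (n1 x * indicator I x) * indicator (S \<inter> (I - A)) x \<partial>lborel)"
      by (rule nn_integral_add[symmetric]) measurable
    also have "\<dots> = (\<integral>\<^sup>+ x. ennreal ((n1 x * indicator (I - A) x + n2 x * indicator A x)) * indicator S x \<partial>lborel)"
      by (rule nn_integral_cong) (use AI in \<open>auto simp: indicator_def\<close>)
    also have "\<dots> = emeasure (density lborel (\<lambda>x. ennreal ((n1 x * indicator (I - A) x + n2 x * indicator A x)))) S"
      by (rule emeasure_density[symmetric]) (simp_all add: gmin gmax)
    finally show "emeasure (distr \<nu>1 lborel (\<lambda>x. max x (T x))) S = emeasure (density lborel (\<lambda>x. ennreal ((n1 x * indicator (I - A) x + n2 x * indicator A x)))) S" .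
  qed

  show ?thesis unfolding Let_def using TA TB eq_min eq_max dens_min dens_max by simp
qed

end
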